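(* Let $A\subseteq\mathbb{N}$ have natural density $\rho(A)=\lim_{n\to\infty}\kappa_A(n)/n\in[0,1]$. Then $m(A)=\rho(A)\,\omega+o(\omega)$.
   Context: $\mathbb{N}=\{1,2,3,\dots\}$, $\mathbb{N}_0=\mathbb{N}\cup\{0\}$. $\mathbf{No}$ denotes Conway's ordered field of surreal numbers, $\omega=\{0,1,2,\dots\mid\ \}$ its first infinite element. An omnific integer is a surreal $x$ with $x=\{x-1\mid x+1\}$; $\mathbf{Nn}$ (surnatural numbers) is the class of nonnegative omnific integers, $\mathbb{N}_0\subset\mathbf{Nn}$. $o(\omega)$ denotes a surreal $w$ with $w/\omega$ infinitesimal. For $A\subseteq\mathbb{N}$, $\kappa_A(n)=|A\cap\{1,\dots,n\}|$. For $f,g:\mathbb{N}\to\mathbb{N}_0$, $f\overset{\to}{=}g$ means $f(n)=g(n)$ for all $n\ge N$ for some $N$; $f\overset{\to}{<}g$ means $f(n)<g(n)$ for all $n\ge N$ for some $N$. Axiom of Extension (standing assumption): every nondecreasing $f:\mathbb{N}\to\mathbb{N}_0$ has an extension $\hat f:\mathbf{Nn}\to\mathbf{Nn}$ with $\hat f(n)=f(n)$ for $n\in\mathbb{N}$ (constant sequences extend to the same constants, the identity extends to the identity), such that for nondecreasing $f,g$: $f\overset{\to}{=}g\Rightarrow\hat f(\nu)=\hat g(\nu)$ for all $\nu\in\mathbf{Nn}\setminus\mathbb{N}$; $f\overset{\to}{<}g\Rightarrow\hat f(\nu)<\hat g(\nu)$ for all $\nu\in\mathbf{Nn}\setminus\mathbb{N}$;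 and $\widehat{f+g}=\hat f+\hat g$, $\widehat{f\cdot g}=\hat f\cdot\hat g$, $\widehat{f\circ g}=\hat f\circ\hat g$ where defined. The magnum of $A\subseteq\mathbb{N}$ is $m(A):=\hat{\kappa_A}(\omega)$. *)

theory Defs
  imports Complex_Main
begin

text \<open>
  The class of surreal numbers No is a proper class and cannot be a HOL type.
  We therefore work with an abstract ordered field 'a containing the reals
  (via of_real, required to be order preserving), a set Nn of surnatural
  numbers, an element omega, and an extension operator ext.  All structural
  facts assumed below hold in Conway's No with Nn the nonnegative omnific
  integers, omega = {0,1,2,...|}, and the extension operator provided by the
  Axiom of Extension.
\<close>

definition kappa :: "nat set \<Rightarrow> nat \<Rightarrow> nat" where
  "kappa A n = card (A \<inter> {1..n})"

definition surnat_axioms :: "'a::{linordered_field,real_algebra_1} set \<Rightarrow> 'a \<Rightarrow> bool" where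
  "surnat_axioms Nn \<omega> \<longleftrightarrow>
     (\<forall>r s::real. r < s \<longrightarrow> (of_real r :: 'a) < of_real s) \<and>
     (\<forall>n::nat. (of_nat n :: 'a) \<in> Nn) \<and>
     (\<forall>x\<in>Nn. 0 \<le> x) \<and>
     (\<forall>x\<in>Nn. \<forall>y\<in>Nn. x + y \<in> Nn \<and> x * y \<in> Nn) \<and>
     (\<forall>x\<in>Nn. \<forall>y\<in>Nn. x < y \<longrightarrow> x + 1 \<le> y) \<and>
     \<omega> \<in> Nn \<and> (\<forall>n::nat. of_nat n < \<omega>)"

definition ev_eq :: "(nat \<Rightarrow> nat) \<Rightarrow> (nat \<Rightarrow> nat) \<Rightarrow> bool" where
  "ev_eq f g \<longleftrightarrow> (\<exists>N. \<forall>n\<ge>N. f n = g n)"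

definition ev_less :: "(nat \<Rightarrow> nat) \<Rightarrow> (nat \<Rightarrow> nat) \<Rightarrow> bool" where
  "ev_less f g \<longleftrightarrow> (\<exists>N. \<forall>n\<ge>N. f n < g n)"

definition nondecr :: "(nat \<Rightarrow> nat) \<Rightarrow> bool" where
  "nondecr f \<longleftrightarrow> mono_on {1..} f"

definition extension_axioms ::
  "'a::{linordered_field,real_algebra_1} set \<Rightarrow> ((nat \<Rightarrow> nat) \<Rightarrow> 'a \<Rightarrow> 'a) \<Rightarrow> bool" where
  "extension_axioms Nn ext \<longleftrightarrow>
     (\<forall>f. nondecr f \<longrightarrow>
        (\<forall>\<nu>\<in>Nn. ext f \<nu> \<in> Nn) \<and>
        (\<forall>n\<ge>1. ext f (of_nat n) = of_nat (f n))) \<and>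
     (\<forall>c. \<forall>\<nu>\<in>Nn. ext (\<lambda>_. c) \<nu> = of_nat c) \<and>
     (\<forall>\<nu>\<in>Nn. ext id \<nu> = \<nu>) \<and>
     (\<forall>f g. nondecr f \<longrightarrow> nondecr g \<longrightarrow>
        (ev_eq f g \<longrightarrow> (\<forall>\<nu>\<in>Nn - range of_nat. ext f \<nu> = ext g \<nu>)) \<and>
        (ev_less f g \<longrightarrow> (\<forall>\<nu>\<in>Nn - range of_nat. ext f \<nu> < ext g \<nu>)) \<and>
        (\<forall>\<nu>\<in>Nn. ext (\<lambda>n. f n + g n) \<nu> = ext f \<nu> + ext g \<nu>) \<and>
        (\<forall>\<nu>\<in>Nn. ext (\<lambda>n. f n * g n) \<nu> = ext f \<nu> * ext g \<nu>) \<and>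
        ((\<forall>n\<ge>1. g n \<ge> 1) \<longrightarrow> (\<forall>\<nu>\<in>Nn. ext (f \<circ> g) \<nu> = ext f (ext g \<nu>))))"

definition magnum :: "((nat \<Rightarrow> nat) \<Rightarrow> 'a \<Rightarrow> 'a) \<Rightarrow> 'a \<Rightarrow> nat set \<Rightarrow> 'a" where
  "magnum ext \<omega> A = ext (kappa A) \<omega>"

definition infinitesimal :: "'a::{linordered_field,real_algebra_1} \<Rightarrow> bool" where
  "infinitesimal x \<longleftrightarrow> (\<forall>r::real. r > 0 \<longrightarrow> \<bar>x\<bar> < of_real r)"

definition small_o :: "'a::{linordered_field,real_algebra_1} \<Rightarrow> 'a \<Rightarrow> bool" where
  "small_o \<omega> w \<longleftrightarrow> infinitesimal (w / \<omega>)"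

end

theory Submission
  imports Defs
begin

lemma nondecr_const: "nondecr (\<lambda>_. c)" by (simp add: nondecr_def mono_on_def)
lemma nondecr_id: "nondecr id" by (simp add: nondecr_def mono_on_def)
lemma nondecr_kappa: "nondecr (kappa A)"
  unfolding nondecr_def mono_on_def kappa_def
  by (auto intro!: card_mono)
lemma nondecr_cmul: "nondecr f \<Longrightarrow> nondecr (\<lambda>n. c * f n)"
  unfolding nondecr_def mono_on_def by auto

lemma ext_cmul:
  assumes "extension_axioms Nn ext" "nondecr f" "\<nu> \<in> Nn"
  shows "ext (\<lambda>n. c * f n) \<nu> = of_nat c * ext f \<nu>"
proof -
  have "ext (\<lambda>n. (\<lambda>_. c) n * f n) \<nu> = ext (\<lambda>_. c) \<nu> * ext f \<nu>"
    using assms nondecr_const[of c] unfolding extension_axioms_def by blast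
  moreover have "ext (\<lambda>_. c) \<nu> = of_nat c"
    using assms unfolding extension_axioms_def by blast
  ultimately show ?thesis by simp
qed

lemma ext_less:
  assumes "extension_axioms Nn ext" "nondecr f" "nondecr g" "ev_less f g"
    "\<nu> \<in> Nn - range of_nat"
  shows "ext f \<nu> < ext g \<nu>"
  using assms unfolding extension_axioms_def by blast

lemma pos_rat_nat:
  assumes "(x::real) \<in> \<rat>" "x > 0"
  obtains p q :: nat where "q > 0" "x = real p / real q"
proof -
  from Rats_abs_nat_div_natE[OF assms(1)] obtain m n :: nat
    where "n \<noteq> 0" "\<bar>x\<bar> = real m / real n" by metis
  with assms(2) show ?thesis using that by auto
qed

theorem theorem6p7:
  fixes Nn :: "'a::{linordered_field,real_algebra_1} set"
    and \<omega> :: 'a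
    and ext :: "(nat \<Rightarrow> nat) \<Rightarrow> 'a \<Rightarrow> 'a"
    and A :: "nat set" and \<rho> :: real
  assumes sn: "surnat_axioms Nn \<omega>"
    and ea: "extension_axioms Nn ext"
    and "A \<subseteq> {1..}"
    and lim: "(\<lambda>n. real (kappa A n) / real n) \<longlonglongrightarrow> \<rho>"
  shows "small_o \<omega> (magnum ext \<omega> A - of_real \<rho> * \<omega>)"
proof -
  define m where "m = ext (kappa A) \<omega>"
  have mono: "\<And>r s. r < s \<Longrightarrow> (of_real r :: 'a) < of_real s"
    and wN: "\<omega> \<in> Nn" and big: "\<And>n. (of_nat n :: 'a) < \<omega>"
    and nonneg: "\<And>x. x \<in> Nn \<Longrightarrow> 0 \<le> x"
    using sn unfolding surnat_axioms_def by auto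
  have wpos: "\<omega> > 0" using big[of 0] by simp
  have wnr: "\<omega> \<in> Nn - range of_nat" using wN big by (auto simp: less_irrefl)
  have mN: "m \<in> Nn" using ea nondecr_kappa wN unfolding m_def extension_axioms_def by blast
  have m0: "m \<ge> 0" using nonneg mN by auto
  have rho0: "\<rho> \<ge> 0"
    by (rule LIMSEQ_le_const[OF lim]) auto
  have extid: "ext (\<lambda>n. p * n) \<omega> = of_nat p * \<omega>" for p
  proof -
    have "ext (\<lambda>n. p * id n) \<omega> = of_nat p * ext id \<omega>"
      by (rule ext_cmul[OF ea nondecr_id wN])
    moreover have "ext id \<omega> = \<omega>" using ea wN unfolding extension_axioms_def by blast
    ultimately show ?thesis by simp
  qed
  have extk: "ext (\<lambda>n. q * kappa A n) \<omega> = of_nat q * m" for q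
    unfolding m_def by (rule ext_cmul[OF ea nondecr_kappa wN])
  have ofr: "of_real (real p / real q) * (of_nat q :: 'a) = of_nat p" if "q > 0" for p q :: nat
  proof -
    have "of_real (real p / real q) * (of_nat q :: 'a) = of_real (real p / real q * real q)"
      by (simp only: of_real_mult of_real_of_nat_eq)
    also have "\<dots> = of_nat p" using that by simp
    finally show ?thesis .
  qed
  have upper: "m < of_real (\<rho> + r) * \<omega>" if rpos: "r > 0" for r
  proof -
    obtain x where x: "x \<in> \<rat>" "\<rho> < x" "x < \<rho> + r" proof -
      have "\<rho> < \<rho> + r" using rpos by simp
      from Rats_dense_in_real[OF this] show ?thesis using that by blast
    qed
    have xpos: "x > 0" using rho0 x(2) by linarith
    obtain p q :: nat where pq: "q > 0" "x = real p / real q"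
      using pos_rat_nat[OF x(1) xpos] by blast
    have "eventually (\<lambda>n. real (kappa A n) / real n < x) sequentially"
      using order_tendstoD(2)[OF lim x(2)] .
    then obtain N where N: "\<And>n. n \<ge> N \<Longrightarrow> real (kappa A n) / real n < x"
      unfolding eventually_sequentially by blast
    have "ev_less (\<lambda>n. q * kappa A n) (\<lambda>n. p * n)"
      unfolding ev_less_def
    proof (intro exI[of _ "max N 1"] allI impI)
      fix n assume n: "max N 1 \<le> n"
      hence "real (kappa A n) / real n < real p / real q" using N pq by auto
      hence "real (kappa A n) * real q < real p * real n"
        using n pq by (simp add: divide_simps)
      hence "real (q * kappa A n) < real (p * n)" by (simp add: mult.commute)
      thus "q * kappa A n < p * n" by linarith
    qed
    hence "ext (\<lambda>n. q * kappa A n) \<omega> < ext (\<lambda>n. p * n) \<omega>"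
      by (intro ext_less[OF ea _ _ _ wnr] nondecr_cmul nondecr_kappa nondecr_id[unfolded id_def])
    hence lt: "of_nat q * m < of_nat p * \<omega>" by (simp add: extid extk)
    have eq: "of_nat q * (of_real x * \<omega>) = of_nat p * (\<omega>::'a)"
      using ofr[OF pq(1), of p] pq(2) by (metis mult.assoc mult.commute)
    have "of_nat q * m < of_nat q * (of_real x * \<omega>)"
      unfolding eq using lt .
    hence "m < of_real x * \<omega>" using pq(1) by (simp add: mult_less_cancel_left)
    also have "\<dots> < of_real (\<rho> + r) * \<omega>" using mono[OF x(3)] wpos by simp
    finally show ?thesis .
  qed
  have lower: "of_real (\<rho> - r) * \<omega> < m" if rpos: "r > 0" for r
  proof (cases "\<rho> - r < 0")
    case True
    have "(of_real (\<rho> - r) :: 'a) < of_real 0" using mono[OF True] .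
    hence "of_real (\<rho> - r) * \<omega> < 0" using wpos by (simp add: mult_neg_pos)
    thus ?thesis using m0 by simp
  next
    case False
    obtain x where x: "x \<in> \<rat>" "\<rho> - r < x" "x < \<rho>" proof -
      have "\<rho> - r < \<rho>" using rpos by simp
      from Rats_dense_in_real[OF this] show ?thesis using that by blast
    qed
    have xpos: "x > 0" using False x(2) by linarith
    obtain p q :: nat where pq: "q > 0" "x = real p / real q"
      using pos_rat_nat[OF x(1) xpos] by blast
    have "eventually (\<lambda>n. x < real (kappa A n) / real n) sequentially"
      using order_tendstoD(1)[OF lim x(3)] .
    then obtain N where N: "\<And>n. n \<ge> N \<Longrightarrow> x < real (kappa A n) / real n"
      unfolding eventually_sequentially by blast
    have "ev_less (\<lambda>n. p * n) (\<lambda>n. q * kappa A n)"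
      unfolding ev_less_def
    proof (intro exI[of _ "max N 1"] allI impI)
      fix n assume n: "max N 1 \<le> n"
      hence "real p / real q < real (kappa A n) / real n" using N pq by auto
      hence "real p * real n < real (kappa A n) * real q"
        using n pq by (simp add: divide_simps)
      hence "real (p * n) < real (q * kappa A n)" by (simp add: mult.commute)
      thus "p * n < q * kappa A n" by linarith
    qed
    hence "ext (\<lambda>n. p * n) \<omega> < ext (\<lambda>n. q * kappa A n) \<omega>"
      by (intro ext_less[OF ea _ _ _ wnr] nondecr_cmul nondecr_kappa nondecr_id[unfolded id_def])
    hence lt: "of_nat p * \<omega> < of_nat q * m" by (simp add: extid extk)
    have eq: "of_nat q * (of_real x * \<omega>) = of_nat p * (\<omega>::'a)"
      using ofr[OF pq(1), of p] pq(2) by (metis mult.assoc mult.commute)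
    have "of_nat q * (of_real x * \<omega>) < of_nat q * m"
      unfolding eq using lt .
    hence "of_real x * \<omega> < m" using pq(1) by (simp add: mult_less_cancel_left)
    have "of_real (\<rho> - r) * \<omega> < of_real x * \<omega>" using mono[OF x(2)] wpos by simp
    thus ?thesis using \<open>of_real x * \<omega> < m\<close> by simp
  qed
  show ?thesis
    unfolding small_o_def infinitesimal_def magnum_def m_def[symmetric]
  proof (intro allI impI)
    fix r :: real assume r: "r > 0"
    have u: "m - of_real \<rho> * \<omega> < of_real r * \<omega>"
      using upper[OF r] by (simp add: of_real_add distrib_right)
    have l: "- (of_real r * \<omega>) < m - of_real \<rho> * \<omega>"
      using lower[OF r] by (simp add: of_real_diff left_diff_distrib)
    have "\<bar>m - of_real \<rho> * \<omega>\<bar> < of_real r * \<omega>" using u l by (simp add: abs_less_iff)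
    thus "\<bar>(m - of_real \<rho> * \<omega>) / \<omega>\<bar> < of_real r"
      using wpos by (simp add: abs_divide pos_divide_less_eq)
  qed
qed

end
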